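(* Grant (Lip-Conv) and (Conv), and let $\rho>0$. On the event $$\Omega'_K=\Big\{\forall f\in F\text{ with }P\mathcal L_f\le\rho,\ \exists J\subset\{1,\dots,K\},|J|>K/2,\ \forall k\in J:\ |(P_{B_k}-P)\mathcal L_f|\le\rho/4\Big\},$$ any minmax MOM estimator $\hat f\in\operatorname{argmin}_{f\in F}\sup_{g\in F}\mathrm{MOM}_K(\ell_f-\ell_g)$ satisfies $P\mathcal L_{\hat f}\le\rho$. (In the paper, $\rho=\bar r_2^2(\gamma)$.)
   Context: Setting: $\bar{\mathcal Y}\subset\mathbb R$ convex, $F\subset L_1(\mu)$ a class of measurable functions $\mathcal X\to\bar{\mathcal Y}$, $\bar\ell:\bar{\mathcal Y}\times\mathcal Y\to\mathbb R$, $\ell_f(x,y)=\bar\ell(f(x),y)$, $(X,Y)\sim P$, $X\sim\mu$, $Pg=\mathbb Eg(X,Y)$; $f^*$ unique minimizer of $f\mapsto P\ell_f$ over $F$, $\mathcal L_f=\ell_f-\ell_{f^*}$. (Lip-Conv): there is $L>0$ with $u\mapsto\bar\ell(u,y)$ convex and $L$-Lipschitz for all $y$. (Conv): $F$ convex. Data $(X_i,Y_i)_{i=1}^N$; $K$ divides $N$; blocks $B_1,\dots,B_K$ of size $N/K$ partition $\{1,\dots,N\}$; $P_{B_k}g=\frac KN\sum_{i\in B_k}g(X_i,Y_i)$; $\mathrm{MOM}_K(g)$ = median of $(P_{B_k}g)_k$. *)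

theory Defs
  imports "HOL-Probability.Probability"
begin

definition block_mean :: "(nat \<Rightarrow> 'z) \<Rightarrow> nat \<Rightarrow> nat \<Rightarrow> nat set \<Rightarrow> ('z \<Rightarrow> real) \<Rightarrow> real" where
  "block_mean Z N K B g = real K / real N * (\<Sum>i\<in>B. g (Z i))"

text \<open>Median of K values v 0, ..., v (K-1): the element of (0-based) index K div 2 in the sorted list
  (the usual median for K odd, the upper median for K even).\<close>
definition median_of :: "nat \<Rightarrow> (nat \<Rightarrow> real) \<Rightarrow> real" where
  "median_of K v = sort (map v [0..<K]) ! (K div 2)"

definition MOM :: "(nat \<Rightarrow> 'z) \<Rightarrow> nat \<Rightarrow> nat \<Rightarrow> (nat \<Rightarrow> nat set) \<Rightarrow> ('z \<Rightarrow> real) \<Rightarrow> real" where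
  "MOM Z N K Bs g = median_of K (\<lambda>k. block_mean Z N K (Bs k) g)"

definition loss :: "(real \<Rightarrow> 'y \<Rightarrow> real) \<Rightarrow> ('x \<Rightarrow> real) \<Rightarrow> 'x \<times> 'y \<Rightarrow> real" where
  "loss lbar f z = lbar (f (fst z)) (snd z)"

end

theory Submission
  imports Defs
begin

lemma count_sort_map:
  fixes v :: "nat \<Rightarrow> real"
  shows "card {i. i < length (sort (map v [0..<K])) \<and> P (sort (map v [0..<K]) ! i)} = card {i. i < K \<and> P (v i)}"
proof -
  have "card {i. i < length (sort (map v [0..<K])) \<and> P (sort (map v [0..<K]) ! i)}
      = length (filter P (sort (map v [0..<K])))" by (simp add: length_filter_conv_card)
  also have "\<dots> = length (filter P (map v [0..<K]))" by (simp add: filter_sort)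
  also have "\<dots> = card {i. i < K \<and> P (map v [0..<K] ! i)}" by (simp add: length_filter_conv_card)
  also have "\<dots> = card {i. i < K \<and> P (v i)}" by (rule arg_cong[where f=card]) auto
  finally show ?thesis .
qed

lemma median_ge:
  fixes v :: "nat \<Rightarrow> real"
  assumes J: "J \<subseteq> {..<K}" "K < 2 * card J" "\<forall>k\<in>J. a \<le> v k"
  shows "a \<le> median_of K v"
proof (rule ccontr)
  define xs where "xs = sort (map v [0..<K])"
  have len: "length xs = K" by (simp add: xs_def)
  have cJ: "card J \<le> K" using card_mono[OF _ J(1)] by simp
  hence Kp: "K div 2 < K" using J(2) by linarith
  assume "\<not> a \<le> median_of K v"
  hence lt: "xs ! (K div 2) < a" by (simp add: median_of_def xs_def)
  have "{..K div 2} \<subseteq> {i. i < length xs \<and> xs!i < a}"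
  proof
    fix i assume "i \<in> {..K div 2}"
    hence "xs ! i \<le> xs ! (K div 2)" using Kp len
      by (intro sorted_nth_mono) (auto simp: xs_def)
    thus "i \<in> {i. i < length xs \<and> xs!i < a}" using lt Kp len \<open>i \<in> _\<close> by auto
  qed
  hence "card {..K div 2} \<le> card {i. i < length xs \<and> xs!i < a}"
    by (intro card_mono) auto
  also have "\<dots> = card {i. i < K \<and> v i < a}" unfolding xs_def by (rule count_sort_map)
  also have "\<dots> \<le> card ({..<K} - J)"
    by (intro card_mono) (use J(3) in auto)
  also have "\<dots> = K - card J" using J(1) by (simp add: card_Diff_subset finite_subset)
  finally show False using J(2) cJ by simp
qed

lemma median_le:
  fixes v :: "nat \<Rightarrow> real"
  assumes J: "J \<subseteq> {..<K}" "K < 2 * card J" "\<forall>k\<in>J. v k \<le> a"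
  shows "median_of K v \<le> a"
proof (rule ccontr)
  define xs where "xs = sort (map v [0..<K])"
  have len: "length xs = K" by (simp add: xs_def)
  have cJ: "card J \<le> K" using card_mono[OF _ J(1)] by simp
  hence Kp: "K div 2 < K" using J(2) by linarith
  assume "\<not> median_of K v \<le> a"
  hence lt: "a < xs ! (K div 2)" by (simp add: median_of_def xs_def)
  have "{K div 2..<K} \<subseteq> {i. i < length xs \<and> a < xs!i}"
  proof
    fix i assume "i \<in> {K div 2..<K}"
    hence "xs ! (K div 2) \<le> xs ! i" using Kp len
      by (intro sorted_nth_mono) (auto simp: xs_def)
    thus "i \<in> {i. i < length xs \<and> a < xs!i}" using lt Kp len \<open>i \<in> _\<close> by auto
  qed
  hence "card {K div 2..<K} \<le> card {i. i < length xs \<and> a < xs!i}"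
    by (intro card_mono) auto
  also have "\<dots> = card {i. i < K \<and> a < v i}" unfolding xs_def by (rule count_sort_map)
  also have "\<dots> \<le> card ({..<K} - J)"
    by (intro card_mono) (use J(3) in force)+
  also have "\<dots> = K - card J" using J(1) by (simp add: card_Diff_subset finite_subset)
  finally show False using J(2) cJ by simp
qed

lemma bm_mono:
  assumes "\<And>z. h1 z \<le> h2 z"
  shows "block_mean Z N K B h1 \<le> block_mean Z N K B h2"
  unfolding block_mean_def using assms by (intro mult_left_mono sum_mono) auto

lemma bm_scale: "block_mean Z N K B (\<lambda>z. c * h z) = c * block_mean Z N K B h"
  unfolding block_mean_def by (simp add: sum_distrib_left algebra_simps)

lemma bm_neg: "block_mean Z N K B (\<lambda>z. a z - b z) = - block_mean Z N K B (\<lambda>z. b z - a z)"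
  unfolding block_mean_def by (simp add: sum_subtractf algebra_simps)

theorem lemma5:
  fixes M :: "('x \<times> 'y) measure" and MX :: "'x measure" and MY :: "'y measure"
    and Ybar :: "real set" and F :: "('x \<Rightarrow> real) set"
    and lbar :: "real \<Rightarrow> 'y \<Rightarrow> real" and L :: real
    and fstar fhat :: "'x \<Rightarrow> real"
    and Z :: "nat \<Rightarrow> 'x \<times> 'y" and N K :: nat and Bs :: "nat \<Rightarrow> nat set" and \<rho> :: real
  assumes P: "prob_space M" and sets_M: "sets M = sets (MX \<Otimes>\<^sub>M MY)"
    and Ybar_convex: "convex Ybar"
    and F_vals: "\<And>f x. f \<in> F \<Longrightarrow> f x \<in> Ybar"
    and F_meas: "\<And>f. f \<in> F \<Longrightarrow> f \<in> borel_measurable MX"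
    and F_L1: "\<And>f. f \<in> F \<Longrightarrow> integrable (distr M MX fst) f"
    and loss_int: "\<And>f. f \<in> F \<Longrightarrow> integrable M (loss lbar f)"
    and L_pos: "L > 0"
    and lip_conv: "\<And>y. convex_on Ybar (\<lambda>u. lbar u y)"
    and lip: "\<And>y u v. u \<in> Ybar \<Longrightarrow> v \<in> Ybar \<Longrightarrow> \<bar>lbar u y - lbar v y\<bar> \<le> L * \<bar>u - v\<bar>"
    and F_convex: "\<And>f g t. f \<in> F \<Longrightarrow> g \<in> F \<Longrightarrow> 0 \<le> t \<Longrightarrow> t \<le> 1 \<Longrightarrow>
                     (\<lambda>x. (1 - t) * f x + t * g x) \<in> F"
    and fstar_in: "fstar \<in> F"
    and fstar_min: "\<And>f. f \<in> F \<Longrightarrow> integral\<^sup>L M (loss lbar fstar) \<le> integral\<^sup>L M (loss lbar f)"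
    and fstar_unique: "\<And>f. f \<in> F \<Longrightarrow> integral\<^sup>L M (loss lbar f) = integral\<^sup>L M (loss lbar fstar) \<Longrightarrow> f = fstar"
    and N_pos: "0 < N" and K_pos: "0 < K" and K_dvd: "K dvd N"
    and blocks_sub: "\<And>k. k < K \<Longrightarrow> Bs k \<subseteq> {..<N}"
    and blocks_card: "\<And>k. k < K \<Longrightarrow> card (Bs k) = N div K"
    and blocks_disj: "\<And>k j. k < K \<Longrightarrow> j < K \<Longrightarrow> k \<noteq> j \<Longrightarrow> Bs k \<inter> Bs j = {}"
    and blocks_cover: "(\<Union>k<K. Bs k) = {..<N}"
    and rho_pos: "\<rho> > 0"
    and event: "\<forall>f\<in>F. integral\<^sup>L M (\<lambda>z. loss lbar f z - loss lbar fstar z) \<le> \<rho> \<longrightarrow>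
                   (\<exists>J\<subseteq>{..<K}. 2 * card J > K \<and>
                      (\<forall>k\<in>J. \<bar>block_mean Z N K (Bs k) (\<lambda>z. loss lbar f z - loss lbar fstar z)
                               - integral\<^sup>L M (\<lambda>z. loss lbar f z - loss lbar fstar z)\<bar> \<le> \<rho> / 4))"
    and fhat_in: "fhat \<in> F"
    and fhat_argmin: "\<And>f. f \<in> F \<Longrightarrow>
        (SUP g\<in>F. ereal (MOM Z N K Bs (\<lambda>z. loss lbar fhat z - loss lbar g z)))
          \<le> (SUP g\<in>F. ereal (MOM Z N K Bs (\<lambda>z. loss lbar f z - loss lbar g z)))"
  shows "integral\<^sup>L M (\<lambda>z. loss lbar fhat z - loss lbar fstar z) \<le> \<rho>"
  proof -
  have mfst: "fst \<in> measurable M MX"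
    using measurable_fst[of MX MY] by (simp add: measurable_cong_sets[OF sets_M refl])
  have intf: "integrable M (\<lambda>z. f (fst z))" if "f \<in> F" for f
    using F_L1[OF that] integrable_distr_eq[OF mfst F_meas[OF that]] by simp
  have intD: "integral\<^sup>L M (\<lambda>z. loss lbar f z - loss lbar fstar z)
      = integral\<^sup>L M (loss lbar f) - integral\<^sup>L M (loss lbar fstar)" if "f \<in> F" for f
    using Bochner_Integration.integral_diff[OF loss_int[OF that] loss_int[OF fstar_in]] by simp
  have key: "\<exists>J\<subseteq>{..<K}. K < 2 * card J \<and>
      (\<forall>k\<in>J. 3 * \<rho> / 4 \<le> block_mean Z N K (Bs k) (\<lambda>z. loss lbar g z - loss lbar fstar z))"
    if g: "g \<in> F" and gt: "\<rho> < integral\<^sup>L M (\<lambda>z. loss lbar g z - loss lbar fstar z)" for g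
  proof -
    define h where "h = (\<lambda>a::real. \<lambda>x. (1 - a) * fstar x + a * g x)"
    have hF: "h a \<in> F" if "a \<in> {0..1}" for a
      using F_convex[OF fstar_in g, of a] that by (simp add: h_def)
    define \<phi> where "\<phi> = (\<lambda>a. integral\<^sup>L M (\<lambda>z. loss lbar (h a) z - loss lbar fstar z))"
    define C where "C = L * integral\<^sup>L M (\<lambda>z. \<bar>g (fst z) - fstar (fst z)\<bar>)"
    have C0: "0 \<le> C" unfolding C_def using L_pos by (intro mult_nonneg_nonneg) auto
    have lipb: "dist (\<phi> a) (\<phi> b) \<le> C * dist a b" if ab: "a \<in> {0..1}" "b \<in> {0..1}" for a b
    proof -
      have "\<phi> a - \<phi> b = integral\<^sup>L M (loss lbar (h a)) - integral\<^sup>L M (loss lbar (h b))"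
        unfolding \<phi>_def intD[OF hF[OF ab(1)]] intD[OF hF[OF ab(2)]] by simp
      also have "\<dots> = integral\<^sup>L M (\<lambda>z. loss lbar (h a) z - loss lbar (h b) z)"
        by (rule Bochner_Integration.integral_diff[symmetric]) (use loss_int hF ab in auto)
      finally have eq: "\<phi> a - \<phi> b = integral\<^sup>L M (\<lambda>z. loss lbar (h a) z - loss lbar (h b) z)" .
      have "\<bar>integral\<^sup>L M (\<lambda>z. loss lbar (h a) z - loss lbar (h b) z)\<bar>
          \<le> integral\<^sup>L M (\<lambda>z. L * \<bar>a - b\<bar> * \<bar>g (fst z) - fstar (fst z)\<bar>)"
      proof -
        have i1: "integrable M (\<lambda>z. loss lbar (h a) z - loss lbar (h b) z)"
          using loss_int hF ab by auto
        have i2: "integrable M (\<lambda>z. L * \<bar>a - b\<bar> * \<bar>g (fst z) - fstar (fst z)\<bar>)"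
          using intf[OF g] intf[OF fstar_in] by (intro integrable_mult_right integrable_abs Bochner_Integration.integrable_diff)
        have pwb: "\<bar>loss lbar (h a) z - loss lbar (h b) z\<bar> \<le> L * \<bar>a - b\<bar> * \<bar>g (fst z) - fstar (fst z)\<bar>" for z
        proof -
          have "\<bar>loss lbar (h a) z - loss lbar (h b) z\<bar> \<le> L * \<bar>h a (fst z) - h b (fst z)\<bar>"
            unfolding loss_def by (rule lip) (use F_vals hF ab in auto)
          also have "h a (fst z) - h b (fst z) = (a - b) * (g (fst z) - fstar (fst z))"
            by (simp add: h_def algebra_simps)
          finally show ?thesis by (simp add: abs_mult mult.assoc)
        qed
        have "\<bar>integral\<^sup>L M (\<lambda>z. loss lbar (h a) z - loss lbar (h b) z)\<bar>
            \<le> integral\<^sup>L M (\<lambda>z. \<bar>loss lbar (h a) z - loss lbar (h b) z\<bar>)"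
          using integral_norm_bound[of M "\<lambda>z. loss lbar (h a) z - loss lbar (h b) z"] by simp
        also have "\<dots> \<le> integral\<^sup>L M (\<lambda>z. L * \<bar>a - b\<bar> * \<bar>g (fst z) - fstar (fst z)\<bar>)"
          by (rule integral_mono) (use i1 i2 pwb in auto)
        finally show ?thesis .
      qed
      also have "\<dots> = C * \<bar>a - b\<bar>" by (simp add: C_def)
      finally show ?thesis using eq by (simp add: dist_real_def)
    qed
    have cont: "continuous_on {0..1} \<phi>"
      by (rule lipschitz_on_continuous_on[OF lipschitz_onI[OF lipb C0]])
    have h0: "h 0 = fstar" and h1: "h 1 = g" by (auto simp: h_def)
    have "\<phi> 0 = 0" by (simp add: \<phi>_def h0)
    moreover have "\<phi> 1 = integral\<^sup>L M (\<lambda>z. loss lbar g z - loss lbar fstar z)" by (simp add: \<phi>_def h1)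
    ultimately obtain \<alpha> where al: "0 \<le> \<alpha>" "\<alpha> \<le> 1" "\<phi> \<alpha> = \<rho>"
      using IVT'[of \<phi> 0 \<rho> 1] cont rho_pos gt by auto
    have apos: "0 < \<alpha>" using al \<open>\<phi> 0 = 0\<close> rho_pos by (cases "\<alpha> = 0") auto
    have haF: "h \<alpha> \<in> F" using hF al by auto
    obtain J where J: "J \<subseteq> {..<K}" "K < 2 * card J"
      "\<forall>k\<in>J. \<bar>block_mean Z N K (Bs k) (\<lambda>z. loss lbar (h \<alpha>) z - loss lbar fstar z) - \<rho>\<bar> \<le> \<rho> / 4"
      using event haF al(3) unfolding \<phi>_def by fastforce
    have pw: "loss lbar (h \<alpha>) z - loss lbar fstar z \<le> \<alpha> * (loss lbar g z - loss lbar fstar z)" for z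
    proof -
      have "lbar ((1 - \<alpha>) *\<^sub>R fstar (fst z) + \<alpha> *\<^sub>R g (fst z)) (snd z)
          \<le> (1 - \<alpha>) * lbar (fstar (fst z)) (snd z) + \<alpha> * lbar (g (fst z)) (snd z)"
        by (rule convex_onD[OF lip_conv]) (use al F_vals fstar_in g in auto)
      thus ?thesis by (simp add: loss_def h_def algebra_simps)
    qed
    show ?thesis
    proof (intro exI[of _ J] conjI J(1) J(2) ballI)
      fix k assume k: "k \<in> J"
      let ?b = "block_mean Z N K (Bs k) (\<lambda>z. loss lbar g z - loss lbar fstar z)"
      have "3 * \<rho> / 4 \<le> block_mean Z N K (Bs k) (\<lambda>z. loss lbar (h \<alpha>) z - loss lbar fstar z)"
        using bspec[OF J(3) k] unfolding abs_le_iff by linarith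
      also have "\<dots> \<le> block_mean Z N K (Bs k) (\<lambda>z. \<alpha> * (loss lbar g z - loss lbar fstar z))"
        by (rule bm_mono) (rule pw)
      also have "\<dots> = \<alpha> * ?b" by (rule bm_scale)
      finally have *: "3 * \<rho> / 4 \<le> \<alpha> * ?b" .
      have bpos: "0 < ?b"
      proof (rule ccontr)
        assume "\<not> 0 < ?b"
        hence "\<alpha> * ?b \<le> 0" using apos by (simp add: mult_nonneg_nonpos)
        thus False using * rho_pos by simp
      qed
      have "\<alpha> * ?b \<le> ?b" using bpos al by (simp add: mult_left_le_one_le)
      thus "3 * \<rho> / 4 \<le> ?b" using * by simp
    qed
  qed
  have claim1: "MOM Z N K Bs (\<lambda>z. loss lbar fstar z - loss lbar g z) \<le> \<rho> / 4" if g: "g \<in> F" for g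
  proof -
    have nn: "0 \<le> integral\<^sup>L M (\<lambda>z. loss lbar g z - loss lbar fstar z)"
      using intD[OF g] fstar_min[OF g] by simp
    obtain J where J: "J \<subseteq> {..<K}" "K < 2 * card J"
      "\<forall>k\<in>J. - (\<rho> / 4) \<le> block_mean Z N K (Bs k) (\<lambda>z. loss lbar g z - loss lbar fstar z)"
    proof (cases "integral\<^sup>L M (\<lambda>z. loss lbar g z - loss lbar fstar z) \<le> \<rho>")
      case True
      then obtain J where J: "J \<subseteq> {..<K}" "K < 2 * card J"
        "\<forall>k\<in>J. \<bar>block_mean Z N K (Bs k) (\<lambda>z. loss lbar g z - loss lbar fstar z)
                 - integral\<^sup>L M (\<lambda>z. loss lbar g z - loss lbar fstar z)\<bar> \<le> \<rho> / 4"
        using event g by blast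
      show ?thesis
      proof (rule that[OF J(1,2)], intro ballI)
        fix k assume "k \<in> J"
        from bspec[OF J(3) this] nn show "- (\<rho> / 4) \<le> block_mean Z N K (Bs k) (\<lambda>z. loss lbar g z - loss lbar fstar z)"
          unfolding abs_le_iff by linarith
      qed
    next
      case False
      then obtain J where J: "J \<subseteq> {..<K}" "K < 2 * card J"
        "\<forall>k\<in>J. 3 * \<rho> / 4 \<le> block_mean Z N K (Bs k) (\<lambda>z. loss lbar g z - loss lbar fstar z)"
        using key[OF g] by force
      show ?thesis by (rule that[OF J(1,2)]) (use J(3) rho_pos in force)
    qed
    show ?thesis unfolding MOM_def
      by (rule median_le[OF J(1,2)]) (use J(3) in \<open>auto simp: bm_neg[of Z N K _ "loss lbar fstar"]\<close>)
  qed
  have sup1: "(SUP g\<in>F. ereal (MOM Z N K Bs (\<lambda>z. loss lbar fstar z - loss lbar g z))) \<le> ereal (\<rho> / 4)"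
    by (rule SUP_least) (use claim1 in simp)
  show ?thesis
  proof (rule ccontr)
    assume "\<not> ?thesis"
    then obtain J where J: "J \<subseteq> {..<K}" "K < 2 * card J"
      "\<forall>k\<in>J. 3 * \<rho> / 4 \<le> block_mean Z N K (Bs k) (\<lambda>z. loss lbar fhat z - loss lbar fstar z)"
      using key[OF fhat_in] by force
    have "3 * \<rho> / 4 \<le> MOM Z N K Bs (\<lambda>z. loss lbar fhat z - loss lbar fstar z)"
      unfolding MOM_def by (rule median_ge[OF J])
    hence "ereal (3 * \<rho> / 4) \<le> ereal (MOM Z N K Bs (\<lambda>z. loss lbar fhat z - loss lbar fstar z))" by simp
    also have "\<dots> \<le> (SUP g\<in>F. ereal (MOM Z N K Bs (\<lambda>z. loss lbar fhat z - loss lbar g z)))"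
      by (rule SUP_upper[OF fstar_in])
    also have "\<dots> \<le> (SUP g\<in>F. ereal (MOM Z N K Bs (\<lambda>z. loss lbar fstar z - loss lbar g z)))"
      by (rule fhat_argmin[OF fstar_in])
    also have "\<dots> \<le> ereal (\<rho> / 4)" by (rule sup1)
    finally show False using rho_pos by simp
  qed
qed

end
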